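(* Let $G$ be a sub-amply regular graph with parameters $(n,k,\lambda,\mu)$ which is not a disjoint union of cliques. Then \[ \lambda + 1 < \max\left\{4\sqrt{2n},\ \frac{6}{\sqrt{13}-1}\sqrt{k(\mu-1)}\right\}. \]
   Context: A graph is sub-amply regular with parameters $(n,k,\lambda,\mu)$ if it has $n$ vertices, is $k$-regular, any two adjacent vertices have exactly $\lambda$ common neighbors, and any two vertices at distance two from each other have at most $\mu$ common neighbors. *)

theory Defs
  imports Complex_Main
begin

definition simple_graph :: "'a set \<Rightarrow> ('a \<Rightarrow> 'a \<Rightarrow> bool) \<Rightarrow> bool" where
  "simple_graph V E \<longleftrightarrow> finite V \<and> (\<forall>x y. E x y \<longrightarrow> x \<in> V \<and> y \<in> V)
     \<and> (\<forall>x y. E x y \<longrightarrow> E y x) \<and> (\<forall>x. \<not> E x x)"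

definition neighbors :: "'a set \<Rightarrow> ('a \<Rightarrow> 'a \<Rightarrow> bool) \<Rightarrow> 'a \<Rightarrow> 'a set" where
  "neighbors V E x = {y \<in> V. E x y}"

definition common_neighbors :: "'a set \<Rightarrow> ('a \<Rightarrow> 'a \<Rightarrow> bool) \<Rightarrow> 'a \<Rightarrow> 'a \<Rightarrow> nat" where
  "common_neighbors V E x y = card (neighbors V E x \<inter> neighbors V E y)"

definition dist_two :: "'a set \<Rightarrow> ('a \<Rightarrow> 'a \<Rightarrow> bool) \<Rightarrow> 'a \<Rightarrow> 'a \<Rightarrow> bool" where
  "dist_two V E x y \<longleftrightarrow> x \<in> V \<and> y \<in> V \<and> x \<noteq> y \<and> \<not> E x y
     \<and> (\<exists>z \<in> V. E x z \<and> E z y)"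

definition sub_amply_regular ::
  "'a set \<Rightarrow> ('a \<Rightarrow> 'a \<Rightarrow> bool) \<Rightarrow> nat \<Rightarrow> nat \<Rightarrow> nat \<Rightarrow> nat \<Rightarrow> bool" where
  "sub_amply_regular V E n k lam mu \<longleftrightarrow> simple_graph V E \<and> card V = n
     \<and> (\<forall>x \<in> V. card (neighbors V E x) = k)
     \<and> (\<forall>x y. E x y \<longrightarrow> common_neighbors V E x y = lam)
     \<and> (\<forall>x y. dist_two V E x y \<longrightarrow> common_neighbors V E x y \<le> mu)"

definition disjoint_union_of_cliques :: "'a set \<Rightarrow> ('a \<Rightarrow> 'a \<Rightarrow> bool) \<Rightarrow> bool" where
  "disjoint_union_of_cliques V E \<longleftrightarrow> (\<exists>P. (\<forall>B \<in> P. B \<noteq> {}) \<and> \<Union>P = V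
     \<and> (\<forall>B \<in> P. \<forall>C \<in> P. B \<noteq> C \<longrightarrow> B \<inter> C = {})
     \<and> (\<forall>x \<in> V. \<forall>y \<in> V. x \<noteq> y \<longrightarrow> (E x y \<longleftrightarrow> (\<exists>B \<in> P. x \<in> B \<and> y \<in> B))))"

end

theory Submission
  imports Defs
begin

lemma double_count:
  assumes "finite A" "finite B"
  shows "(\<Sum>a\<in>A. card {b\<in>B. P a b}) = (\<Sum>b\<in>B. card {a\<in>A. P a b})"
proof -
  have c: "card {x\<in>C. Q x} = (\<Sum>x\<in>C. if Q x then 1 else 0)" if "finite C" for C and Q :: "'c \<Rightarrow> bool"
    using that by (simp add: sum.inter_filter[symmetric])
  have "(\<Sum>a\<in>A. card {b\<in>B. P a b}) = (\<Sum>a\<in>A. \<Sum>b\<in>B. (if P a b then 1 else 0::nat))"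
    by (intro sum.cong) (simp_all add: c assms)
  also have "\<dots> = (\<Sum>b\<in>B. \<Sum>a\<in>A. (if P a b then 1 else 0::nat))" by (rule sum.swap)
  also have "\<dots> = (\<Sum>b\<in>B. card {a\<in>A. P a b})"
    by (intro sum.cong) (simp_all add: c assms)
  finally show ?thesis .
qed

lemma card_Un3:
  assumes "finite A" "finite B" "finite C" "A\<inter>B={}" "A\<inter>C={}" "B\<inter>C={}"
  shows "card (A\<union>B\<union>C) = card A + card B + card C"
proof -
  have "card (A\<union>B\<union>C) = card (A\<union>B) + card C"
    by (rule card_Un_disjoint) (use assms in auto)
  also have "card (A\<union>B) = card A + card B" by (rule card_Un_disjoint) (use assms in auto)
  finally show ?thesis .
qed

locale sar =
  fixes V :: "'a set" and E :: "'a \<Rightarrow> 'a \<Rightarrow> bool" and k lam mu :: nat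
  assumes fin: "finite V"
    and sym: "E x y \<Longrightarrow> E y x"
    and irr: "\<not> E x x"
    and inV: "E x y \<Longrightarrow> x \<in> V \<and> y \<in> V"
    and reg: "x \<in> V \<Longrightarrow> card (neighbors V E x) = k"
    and lamc: "E x y \<Longrightarrow> card (neighbors V E x \<inter> neighbors V E y) = lam"
    and muc: "dist_two V E x y \<Longrightarrow> card (neighbors V E x \<inter> neighbors V E y) \<le> mu"
begin

abbreviation N where "N x \<equiv> neighbors V E x"

lemma Nmem[simp]: "y \<in> N x \<longleftrightarrow> E x y"
  using inV unfolding neighbors_def by auto

lemma NV: "N x \<subseteq> V" unfolding neighbors_def by auto

lemma finN[simp]: "finite (N x)" using fin NV finite_subset by blast

lemma notN[simp]: "x \<notin> N x" using irr by simp

lemma finE[simp]: "finite {b. E v b \<and> P b}"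
  by (rule finite_subset[of _ "N v"]) auto

lemma irrF[simp]: "E x x = False" using irr by simp

lemma mu2: "E x z \<Longrightarrow> E z y \<Longrightarrow> x \<noteq> y \<Longrightarrow> \<not> E x y \<Longrightarrow> card (N x \<inter> N y) \<le> mu"
  apply (rule muc)
  unfolding dist_two_def using inV by blast

lemma kE: "E x y \<Longrightarrow> card (N x) = k" using reg inV by blast

lemma ineq1:
  assumes vx: "E v x"
  defines "A \<equiv> N v \<inter> N x"
  shows "(\<Sum>a\<in>A. card (A - {a} - N a)) + (k - lam - 1) \<le> (k - lam - 1) * mu"
    and "k = lam + 1 + card (N v - N x - {x})"
proof -
  define B where "B = N v - N x - {x}"
  have cA: "card A = lam" unfolding A_def using lamc vx by blast
  have xv: "x \<in> N v" using vx by simp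
  have "N v = A \<union> {x} \<union> B" unfolding A_def B_def using xv by auto
  moreover have "card (A \<union> {x} \<union> B) = card A + card {x} + card B"
    by (rule card_Un3) (auto simp: A_def B_def)
  ultimately have "card (N v) = card A + (1 + card B)" by simp
  hence kk: "k = lam + 1 + card B" using kE[OF vx] cA by simp
  thus "k = lam + 1 + card (N v - N x - {x})" unfolding B_def .
  have eq: "card (A - {a} - N a) = card {b\<in>B. E a b}" if aA: "a \<in> A" for a
  proof -
    have av: "E a v" "E a x" using aA sym unfolding A_def by auto
    have c1: "card (N a \<inter> N v) = lam" using lamc av by blast
    have "N a \<inter> N v = (N a \<inter> A) \<union> {x} \<union> {b\<in>B. E a b}"
      unfolding A_def B_def using av vx by auto
    moreover have "card ((N a \<inter> A) \<union> {x} \<union> {b\<in>B. E a b}) = card (N a \<inter> A) + card {x} + card {b\<in>B. E a b}"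
      by (rule card_Un3) (auto simp: A_def B_def)
    ultimately have e1: "lam = card (N a \<inter> A) + (1 + card {b\<in>B. E a b})"
      using c1 by simp
    have "A = {a} \<union> (N a \<inter> A) \<union> (A - {a} - N a)" using aA by auto
    moreover have "card ({a} \<union> (N a \<inter> A) \<union> (A - {a} - N a)) = card {a} + card (N a \<inter> A) + card (A - {a} - N a)"
      by (rule card_Un3) (auto simp: A_def)
    ultimately have "card A = 1 + (card (N a \<inter> A) + card (A - {a} - N a))" by simp
    thus ?thesis using e1 cA by simp
  qed
  have "(\<Sum>a\<in>A. card (A - {a} - N a)) = (\<Sum>a\<in>A. card {b\<in>B. E a b})"
    using eq by simp
  also have "\<dots> = (\<Sum>b\<in>B. card {a\<in>A. E a b})"
    by (rule double_count) (auto simp: A_def B_def)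
  finally have s: "(\<Sum>a\<in>A. card (A - {a} - N a)) = (\<Sum>b\<in>B. card {a\<in>A. E a b})" .
  have bnd: "card {a\<in>A. E a b} + 1 \<le> mu" if bB: "b \<in> B" for b
  proof -
    have "insert v {a\<in>A. E a b} \<subseteq> N b \<inter> N x" using bB[unfolded B_def] vx sym unfolding A_def by auto
    moreover have "v \<notin> {a\<in>A. E a b}" unfolding A_def by auto
    ultimately have "card {a\<in>A. E a b} + 1 \<le> card (N b \<inter> N x)"
    proof -
      assume s1: "insert v {a\<in>A. E a b} \<subseteq> N b \<inter> N x" and s2: "v \<notin> {a\<in>A. E a b}"
      have f: "finite {a\<in>A. E a b}" unfolding A_def by auto
      have "card (insert v {a\<in>A. E a b}) \<le> card (N b \<inter> N x)" by (rule card_mono) (use s1 in auto)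
      thus ?thesis using card_insert_disjoint[OF f s2] by simp
    qed
    moreover have "card (N b \<inter> N x) \<le> mu"
      apply (rule mu2[of b v x]) using bB[unfolded B_def] vx sym by auto
    ultimately show ?thesis by simp
  qed
  have "(\<Sum>b\<in>B. card {a\<in>A. E a b} + 1) \<le> (\<Sum>b\<in>B. mu)" by (rule sum_mono) (use bnd in auto)
  hence hh: "(\<Sum>b\<in>B. card {a\<in>A. E a b}) + card B \<le> card B * mu" by (simp add: sum_Suc)
  show "(\<Sum>a\<in>A. card (A - {a} - N a)) + (k - lam - 1) \<le> (k - lam - 1) * mu"
  proof -
    have cB: "k - lam - 1 = card B" using kk by simp
    have "(\<Sum>a\<in>A. card (A - {a} - N a)) + card B \<le> mu * card B" using hh s by (simp add: mult.commute)
    thus ?thesis unfolding cB by (simp add: mult.commute)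
  qed
qed

definition l :: real where "l = real lam + 1"
definition m :: real where "m = real mu - 1"
definition K2 :: real where "K2 = m * (real k - l)"
definition tt where "tt v x y = card (N v \<inter> N x \<inter> N y)"
definition ft :: "'a \<Rightarrow> 'a \<Rightarrow> 'a \<Rightarrow> real" where "ft v x y = real lam - 1 - real (tt v x y)"

lemma tt_perm: "tt v x y = tt x v y" "tt v x y = tt v y x" "tt v x y = tt y x v"
  unfolding tt_def by (simp_all add: Int_ac)

lemma ineq1r:
  assumes "E v x"
  shows "real (\<Sum>a\<in>N v \<inter> N x. card (N v \<inter> N x - {a} - N a)) \<le> K2"
proof -
  note i1 = ineq1[OF assms]
  define c where "c = k - lam - 1"
  have rc: "real c = real k - l" unfolding c_def l_def using i1(2) by simp
  have h: "(\<Sum>a\<in>N v \<inter> N x. card (N v \<inter> N x - {a} - N a)) + c \<le> c * mu"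
    using i1(1) unfolding c_def .
  have "real ((\<Sum>a\<in>N v \<inter> N x. card (N v \<inter> N x - {a} - N a)) + c) \<le> real (c * mu)"
    using h by (simp only: of_nat_le_iff)
  hence "real (\<Sum>a\<in>N v \<inter> N x. card (N v \<inter> N x - {a} - N a)) + real c \<le> real c * real mu"
    by (simp only: of_nat_add of_nat_mult)
  thus ?thesis unfolding K2_def m_def rc by (simp add: algebra_simps)
qed

lemma ft_card:
  assumes "a \<in> N v \<inter> N x" and vx: "E v x"
  shows "ft v x a = real (card (N v \<inter> N x - {a} - N a))"
proof -
  define A where "A = N v \<inter> N x"
  have aA: "a \<in> A" using assms A_def by simp
  have "A = {a} \<union> (N a \<inter> A) \<union> (A - {a} - N a)" using aA by auto
  moreover have "card ({a} \<union> (N a \<inter> A) \<union> (A - {a} - N a)) = card {a} + card (N a \<inter> A) + card (A - {a} - N a)"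
    by (rule card_Un3) (auto simp: A_def)
  ultimately have "card A = 1 + (card (N a \<inter> A) + card (A - {a} - N a))" by simp
  moreover have "card A = lam" unfolding A_def using lamc vx by blast
  moreover have "N a \<inter> A = N v \<inter> N x \<inter> N a" unfolding A_def by auto
  ultimately show ?thesis unfolding ft_def tt_def A_def by simp
qed

lemma ineqB:
  assumes vx: "E v x" and vy: "E v y" and xy: "E x y"
  shows "ft v x y * (l - m - ft v x y) \<le> K2"
proof -
  define A where "A = N v \<inter> N x"
  define F where "F = A - N y - {y}"
  define t where "t = tt v x y"
  have yA: "y \<in> A" unfolding A_def using vy xy by simp
  have AY: "A \<inter> N y = N v \<inter> N x \<inter> N y" unfolding A_def by simp
  have cAY: "card (A \<inter> N y) = t" unfolding AY t_def tt_def ..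
  have "A = {y} \<union> (A \<inter> N y) \<union> F" unfolding F_def using yA by auto
  moreover have "card ({y} \<union> (A \<inter> N y) \<union> F) = card {y} + card (A \<inter> N y) + card F"
    by (rule card_Un3) (auto simp: A_def F_def)
  moreover have "card A = lam" unfolding A_def using lamc vx by blast
  ultimately have cF: "lam = 1 + t + card F" using cAY by simp
  have rF: "real (card F) = ft v x y" unfolding ft_def t_def[symmetric] using cF by simp
  have qb: "real (card (A - {q} - N q)) \<ge> real t + 3 - real mu" if qF: "q \<in> F" for q
  proof -
    have qA: "q \<in> A" and qy: "\<not> E y q" "q \<noteq> y" using qF unfolding F_def by auto
    have eqs: "E v q" "E x q" using qA unfolding A_def by auto
    have s1: "insert y (A \<inter> N y - N q) \<subseteq> A - {q} - N q" using yA qy qA by (auto intro: sym)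
    have ny: "y \<notin> A \<inter> N y - N q" by simp
    have fin1: "finite (A \<inter> N y - N q)" unfolding A_def by simp
    have "card (insert y (A \<inter> N y - N q)) \<le> card (A - {q} - N q)"
      by (rule card_mono[OF _ s1]) (simp add: A_def)
    hence c1: "card (A \<inter> N y - N q) + 1 \<le> card (A - {q} - N q)"
      using card_insert_disjoint[OF fin1 ny] by simp
    have u: "A \<inter> N y = (A \<inter> N y - N q) \<union> (A \<inter> N y \<inter> N q)" by auto
    have "card ((A \<inter> N y - N q) \<union> (A \<inter> N y \<inter> N q)) = card (A \<inter> N y - N q) + card (A \<inter> N y \<inter> N q)"
      by (rule card_Un_disjoint) (auto simp: A_def)
    hence c2: "card (A \<inter> N y - N q) + card (A \<inter> N y \<inter> N q) = t"
      using cAY u by simp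
    have s3: "insert v (insert x (A \<inter> N y \<inter> N q)) \<subseteq> N q \<inter> N y"
      using eqs vy xy by (auto intro: sym)
    have nv: "v \<notin> insert x (A \<inter> N y \<inter> N q)" using vx unfolding A_def by auto
    have nx: "x \<notin> A \<inter> N y \<inter> N q" unfolding A_def by auto
    have fin3: "finite (A \<inter> N y \<inter> N q)" unfolding A_def by simp
    have "card (insert v (insert x (A \<inter> N y \<inter> N q))) \<le> card (N q \<inter> N y)"
      by (rule card_mono[OF _ s3]) simp
    hence c3: "card (A \<inter> N y \<inter> N q) + 2 \<le> card (N q \<inter> N y)"
      using card_insert_disjoint[OF fin3 nx] nv fin3 by simp
    have "card (N q \<inter> N y) \<le> mu"
      by (rule mu2[of q v y]) (use eqs vy qy in \<open>auto intro: sym\<close>)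
    with c1 c2 c3 show ?thesis by linarith
  qed
  have e1: "l - m - ft v x y = real t + 3 - real mu"
    unfolding l_def m_def ft_def t_def by simp
  have "ft v x y * (l - m - ft v x y) = (\<Sum>q\<in>F. real t + 3 - real mu)"
    by (subst e1) (simp add: rF[symmetric])
  also have "\<dots> \<le> (\<Sum>q\<in>F. real (card (A - {q} - N q)))" by (rule sum_mono) (use qb in auto)
  also have "\<dots> \<le> (\<Sum>q\<in>A. real (card (A - {q} - N q)))"
    by (rule sum_mono2) (auto simp: F_def A_def)
  also have "\<dots> = real (\<Sum>q\<in>A. card (A - {q} - N q))" by simp
  also have "\<dots> \<le> K2" unfolding A_def by (rule ineq1r[OF vx])
  finally show ?thesis .
qed


lemma tt_perm2: "tt a b c = tt b a c" "tt a b c = tt a c b" "tt a b c = tt c b a"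
   "tt a b c = tt b c a" "tt a b c = tt c a b"
  unfolding tt_def by (simp_all add: Int_ac)

lemma cherry_facts:
  assumes zx: "E z x" and zy: "E z y" and xy: "x \<noteq> y" "\<not> E x y"
  shows "real k \<ge> 2 * l - m" "real mu \<ge> 1" "real k \<ge> l"
proof -
  have kk: "k = lam + 1 + card (N z - N x - {x})" using ineq1(2)[OF zx] .
  define I where "I = N z \<inter> N y \<inter> N x"
  have s1: "insert z I \<subseteq> N x \<inter> N y" unfolding I_def using zx zy by (auto intro: sym)
  have nz: "z \<notin> I" unfolding I_def by simp
  have fI: "finite I" unfolding I_def by simp
  have "card (insert z I) \<le> card (N x \<inter> N y)" by (rule card_mono[OF _ s1]) simp
  moreover have "card (N x \<inter> N y) \<le> mu" by (rule mu2[of x z y]) (use zx zy xy in \<open>auto intro: sym\<close>)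
  ultimately have cI: "card I + 1 \<le> mu" using card_insert_disjoint[OF fI nz] by simp
  have s2: "insert y (N z \<inter> N y - I) \<subseteq> N z - N x - {x}" unfolding I_def using zy xy by (auto intro: sym)
  have ny: "y \<notin> N z \<inter> N y - I" by simp
  have f2: "finite (N z \<inter> N y - I)" by simp
  have "card (insert y (N z \<inter> N y - I)) \<le> card (N z - N x - {x})" by (rule card_mono[OF _ s2]) simp
  hence c2: "card (N z \<inter> N y - I) + 1 \<le> card (N z - N x - {x})" using card_insert_disjoint[OF f2 ny] by simp
  have "card (N z \<inter> N y - I) = card (N z \<inter> N y) - card I"
    by (rule card_Diff_subset) (auto simp: I_def)
  moreover have "card (N z \<inter> N y) = lam" using lamc zy by blast
  moreover have "card I \<le> card (N z \<inter> N y)" by (rule card_mono) (auto simp: I_def)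
  ultimately have "lam + 1 \<le> card I + card (N z - N x - {x})" using c2 by simp
  hence "2 * lam + 2 \<le> card I + k" using kk by simp
  hence "2 * real lam + 2 \<le> real (card I) + real k" by simp
  moreover have "real (card I) + 1 \<le> real mu" using cI by simp
  ultimately show "real k \<ge> 2 * l - m" unfolding l_def m_def by simp
  show "real mu \<ge> 1" using cI by simp
  show "real k \<ge> l" using kk unfolding l_def by simp
qed


lemma cherry:
  assumes nd: "\<not> disjoint_union_of_cliques V E"
  shows "\<exists>z x y. E z x \<and> E z y \<and> x \<noteq> y \<and> \<not> E x y"
proof (rule ccontr)
  assume "\<not> ?thesis"
  hence H: "\<And>z x y. E z x \<Longrightarrow> E z y \<Longrightarrow> x \<noteq> y \<Longrightarrow> E x y" by blast
  define R where "R u v \<longleftrightarrow> u = v \<or> E u v" for u v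
  have Rs: "R u v \<Longrightarrow> R v u" for u v unfolding R_def using sym by blast
  have Rt: "R u v \<Longrightarrow> R v w \<Longrightarrow> R u w" for u v w
    unfolding R_def using H sym by blast
  define blk where "blk z = {y \<in> V. R z y}" for z
  define P where "P = blk ` V"
  have "disjoint_union_of_cliques V E"
    unfolding disjoint_union_of_cliques_def
  proof (intro exI[of _ P] conjI ballI impI)
    fix B assume "B \<in> P" thus "B \<noteq> {}" unfolding P_def blk_def R_def by auto
  next
    show "\<Union>P = V" unfolding P_def blk_def R_def by auto
  next
    fix B C assume B: "B \<in> P" and C: "C \<in> P" and ne: "B \<noteq> C"
    obtain a b where ab: "B = blk a" "C = blk b" using B C unfolding P_def by auto
    show "B \<inter> C = {}"
    proof (rule ccontr)
      assume "B \<inter> C \<noteq> {}"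
      then obtain y where y: "R a y" "R b y" unfolding ab blk_def by auto
      have "blk a = blk b" unfolding blk_def using y Rs Rt by blast
      thus False using ne ab by simp
    qed
  next
    fix x y assume xV: "x \<in> V" and yV: "y \<in> V" and ne: "x \<noteq> y"
    show "E x y = (\<exists>B\<in>P. x \<in> B \<and> y \<in> B)"
    proof
      assume "E x y" thus "\<exists>B\<in>P. x \<in> B \<and> y \<in> B"
        using xV yV unfolding P_def blk_def R_def by auto
    next
      assume "\<exists>B\<in>P. x \<in> B \<and> y \<in> B"
      then obtain z where "R z x" "R z y" unfolding P_def blk_def by auto
      hence "R x y" using Rs Rt by blast
      thus "E x y" using ne unfolding R_def by simp
    qed
  qed
  with nd show False by simp
qed

end

locale sar2 = sar +
  assumes ml: "m < l" and gap: "9 * K2 < 2 * (l - m)^2"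
begin

definition strong where "strong v x y \<longleftrightarrow> 3 * ft v x y < l - m"

lemma ft_perm: "ft a b c = ft b a c" "ft a b c = ft a c b" "ft a b c = ft c b a"
   "ft a b c = ft b c a" "ft a b c = ft c a b"
  unfolding ft_def using tt_perm2 by simp_all

lemma dich:
  assumes "E v x" "E v y" "E x y"
  shows "strong v x y \<or> 3 * ft v x y > 2 * (l - m)"
proof (rule ccontr)
  assume "\<not> ?thesis"
  hence h: "l - m \<le> 3 * ft v x y" "3 * ft v x y \<le> 2 * (l - m)" unfolding strong_def by auto
  define f where "f = ft v x y"
  define u where "u = l - m"
  have b: "f * (u - f) \<le> K2" unfolding f_def u_def using ineqB[OF assms] .
  have "0 \<le> (3*f - u) * (2*u - 3*f)" by (rule mult_nonneg_nonneg) (use h in \<open>auto simp: f_def u_def\<close>)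
  moreover have "(3*f - u) * (2*u - 3*f) = 9*(f*(u-f)) - 2*u^2" by (simp add: algebra_simps power2_eq_square)
  ultimately show False using b gap unfolding u_def by linarith
qed

lemma trans_strong:
  assumes va: "E v a" and vb: "E v b" and vc: "E v c" and ab: "E a b" and bc: "E b c"
    and ac: "a \<noteq> c" and s1: "strong v a b" and s2: "strong v b c"
  shows "E a c \<and> strong v a c"
proof -
  define X where "X = N v \<inter> N a \<inter> N b"
  define Y where "Y = N v \<inter> N b \<inter> N c"
  have cX: "card X = tt v a b" unfolding X_def tt_def ..
  have cY: "card Y = tt v b c" unfolding Y_def tt_def ..
  have fX: "finite X" "finite Y" "finite (X \<inter> Y)" "finite (X \<union> Y)" unfolding X_def Y_def by auto
  have cUI: "card (X \<union> Y) + card (X \<inter> Y) = card X + card Y" using card_Un_Int[OF fX(1,2)] by simp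
  have lb: "card (N v \<inter> N b) = lam" using lamc vb by blast
  have u: "0 < l - m" using ml by simp
  have fs: "3 * (ft v a b + ft v b c) < 2 * (l - m)" using s1 s2 unfolding strong_def by simp
  have eac: "E a c"
  proof (rule ccontr)
    assume nac: "\<not> E a c"
    have "card (insert a (insert c (X \<union> Y))) \<le> card (N v \<inter> N b)"
      by (rule card_mono) (use va vb vc ab bc in \<open>auto simp: X_def Y_def intro: sym\<close>)
    moreover have "a \<notin> insert c (X \<union> Y)" using ac nac unfolding X_def Y_def by (auto intro: sym)
    moreover have "c \<notin> X \<union> Y" using nac unfolding X_def Y_def by (auto intro: sym)
    ultimately have c1: "card (X \<union> Y) + 2 \<le> lam" using lb fX by simp
    have "card (insert v (insert b (X \<inter> Y))) \<le> card (N a \<inter> N c)"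
      by (rule card_mono) (use va vb vc ab bc in \<open>auto simp: X_def Y_def intro: sym\<close>)
    moreover have "v \<notin> insert b (X \<inter> Y)" using vb unfolding X_def Y_def by auto
    moreover have "b \<notin> X \<inter> Y" unfolding X_def Y_def by auto
    moreover have "card (N a \<inter> N c) \<le> mu" by (rule mu2[of a b c]) (use ab bc ac nac in auto)
    ultimately have c2: "card (X \<inter> Y) + 2 \<le> mu" using fX by simp
    have "tt v a b + tt v b c + 4 \<le> lam + mu" using c1 c2 cUI cX cY by simp
    hence "real (tt v a b) + real (tt v b c) + 4 \<le> real lam + real mu" by linarith
    hence "ft v a b + ft v b c \<ge> l - m" unfolding ft_def l_def m_def by simp
    thus False using fs u by (smt (verit))
  qed
  have "card (insert b (X \<inter> Y)) \<le> card (N v \<inter> N a \<inter> N c)"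
    by (rule card_mono) (use va vb vc ab bc in \<open>auto simp: X_def Y_def intro: sym\<close>)
  moreover have "b \<notin> X \<inter> Y" unfolding X_def Y_def by auto
  ultimately have c3: "card (X \<inter> Y) + 1 \<le> tt v a c" using fX unfolding tt_def by simp
  have "card (X \<union> Y) \<le> card (N v \<inter> N b)" by (rule card_mono) (auto simp: X_def Y_def)
  hence "tt v a b + tt v b c + 1 \<le> lam + tt v a c" using c3 cUI cX cY lb by simp
  hence "real (tt v a b) + real (tt v b c) + 1 \<le> real lam + real (tt v a c)" by linarith
  hence "ft v a c \<le> ft v a b + ft v b c" unfolding ft_def by simp
  hence "3 * ft v a c \<le> 2 * (l - m)" using fs by (smt (verit))
  hence "strong v a c" using dich[OF va vc eac] by linarith
  with eac show ?thesis by simp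
qed

definition rel where "rel v u y \<longleftrightarrow> y = u \<or> (E u y \<and> E v y \<and> strong v u y)"
definition cls where "cls v u = {y. rel v u y}"

lemma rel_sym: "E v u \<Longrightarrow> rel v u y \<Longrightarrow> rel v y u"
  unfolding rel_def strong_def using ft_perm(2)[of v u y] by (auto intro: sym)

lemma rel_trans: "E v a \<Longrightarrow> rel v a b \<Longrightarrow> rel v b c \<Longrightarrow> rel v a c"
proof -
  assume va: "E v a" and r1: "rel v a b" and r2: "rel v b c"
  show "rel v a c"
  proof (cases "b = a \<or> c = b \<or> a = c")
    case True thus ?thesis using r1 r2 unfolding rel_def by auto
  next
    case False
    hence h: "E a b" "E v b" "strong v a b" "E b c" "E v c" "strong v b c" "a \<noteq> c"
      using r1 r2 unfolding rel_def by auto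
    from trans_strong[OF va h(2) h(5) h(1) h(4) h(7) h(3) h(6)] h show ?thesis
      unfolding rel_def by auto
  qed
qed

lemma cls_eq: assumes vu: "E v u" and y: "y \<in> cls v u" shows "cls v y = cls v u"
proof -
  have ruy: "rel v u y" using y unfolding cls_def by simp
  have vy: "E v y" using ruy vu unfolding rel_def by auto
  have ryu: "rel v y u" by (rule rel_sym[OF vu ruy])
  show ?thesis unfolding cls_def
    using rel_trans[OF vu ruy] rel_trans[OF vy ryu] by auto
qed

lemma cls_sub: "E v u \<Longrightarrow> cls v u \<subseteq> N v"
  unfolding cls_def rel_def by auto

definition S where "S = l - 3 * K2 / (2 * (l - m))"

lemma cls_size:
  assumes vu: "E v u"
  shows "real (card (cls v u)) \<ge> S"
proof -
  define A where "A = N v \<inter> N u"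
  define W where "W = {a \<in> A. \<not> strong v u a}"
  have u0: "0 < l - m" using ml by simp
  have WA: "W \<subseteq> A" unfolding W_def by auto
  have fA: "finite A" unfolding A_def by simp
  have wb: "3 * ft v u a > 2 * (l - m)" if "a \<in> W" for a
  proof -
    have "E v a" "E u a" "\<not> strong v u a" using that unfolding W_def A_def by auto
    thus ?thesis using dich[OF vu \<open>E v a\<close> \<open>E u a\<close>] by auto
  qed
  have "(\<Sum>a\<in>W. 2 * (l - m) / 3) \<le> (\<Sum>a\<in>W. ft v u a)"
    by (rule sum_mono) (use wb in fastforce)
  also have "\<dots> = (\<Sum>a\<in>W. real (card (A - {a} - N a)))"
    unfolding A_def by (rule sum.cong[OF refl], rule ft_card[OF _ vu]) (use WA[unfolded A_def] in auto)
  also have "\<dots> \<le> (\<Sum>a\<in>A. real (card (A - {a} - N a)))"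
    by (rule sum_mono2[OF fA WA]) auto
  also have "\<dots> = real (\<Sum>a\<in>A. card (A - {a} - N a))" by simp
  also have "\<dots> \<le> K2" unfolding A_def by (rule ineq1r[OF vu])
  finally have "real (card W) * (2 * (l - m) / 3) \<le> K2" by simp
  hence cW: "real (card W) \<le> 3 * K2 / (2 * (l - m))" using u0 by (simp add: field_simps)
  have sub: "insert u (A - W) \<subseteq> cls v u" unfolding cls_def rel_def W_def A_def by auto
  have nu: "u \<notin> A - W" unfolding A_def by simp
  have "card (insert u (A - W)) \<le> card (cls v u)"
    by (rule card_mono[OF _ sub]) (rule finite_subset[OF cls_sub[OF vu]], simp)
  hence "card (A - W) + 1 \<le> card (cls v u)" using card_insert_disjoint[of "A - W" u] fA nu by simp
  moreover have "card (A - W) = card A - card W" by (rule card_Diff_subset) (use fA WA finite_subset in auto)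
  moreover have "card A = lam" unfolding A_def using lamc vu by blast
  moreover have "card W \<le> card A" by (rule card_mono[OF fA WA])
  ultimately have "real lam + 1 \<le> real (card (cls v u)) + real (card W)" by linarith
  thus ?thesis using cW unfolding S_def l_def by linarith
qed


lemma fam_bound:
  assumes vV: "v \<in> V"
  shows "real (card (cls v ` N v)) * S \<le> real k"
proof -
  define F where "F = cls v ` N v"
  have fin: "\<And>C. C \<in> F \<Longrightarrow> finite C" unfolding F_def using cls_sub finite_subset by fastforce
  have pw: "pairwise disjnt F"
  proof (rule pairwiseI)
    fix C1 C2 assume c1: "C1 \<in> F" and c2: "C2 \<in> F" and ne: "C1 \<noteq> C2"
    obtain u1 u2 where u: "u1 \<in> N v" "u2 \<in> N v" "C1 = cls v u1" "C2 = cls v u2"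
      using c1 c2 unfolding F_def by auto
    show "disjnt C1 C2"
    proof (rule ccontr)
      assume "\<not> disjnt C1 C2"
      then obtain y where y: "y \<in> C1" "y \<in> C2" unfolding disjnt_def by auto
      have e1: "E v u1" "E v u2" using u(1,2) by simp_all
      have "cls v y = C1" unfolding u(3) by (rule cls_eq[OF e1(1)]) (use y u(3) in simp)
      moreover have "cls v y = C2" unfolding u(4) by (rule cls_eq[OF e1(2)]) (use y u(4) in simp)
      ultimately have "cls v y = C1" "cls v y = C2" by simp_all
      thus False using ne by simp
    qed
  qed
  have "card (\<Union>F) = sum card F" by (rule card_Union_disjoint[OF pw fin])
  moreover have "card (\<Union>F) \<le> card (N v)"
  proof (rule card_mono)
    show "\<Union>F \<subseteq> N v"
    proof
      fix y assume "y \<in> \<Union>F"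
      then obtain u where "u \<in> N v" "y \<in> cls v u" unfolding F_def by auto
      thus "y \<in> N v" using cls_sub[of v u] by auto
    qed
  qed simp
  moreover have "card (N v) = k" using reg vV by simp
  ultimately have nk: "sum card F \<le> k" by simp
  have "(\<Sum>C\<in>F. real (card C)) = real (sum card F)" by simp
  also have "\<dots> \<le> real k" using nk by (simp only: of_nat_le_iff)
  finally have a: "(\<Sum>C\<in>F. real (card C)) \<le> real k" .
  have "real (card F) * S \<le> (\<Sum>C\<in>F. real (card C))"
    by (rule sum_bounded_below) (use cls_size in \<open>auto simp: F_def\<close>)
  with a show ?thesis unfolding F_def by simp
qed

lemma pbound:
  assumes zV: "z \<in> V" and wV: "w \<in> V" and zw: "z \<noteq> w" "\<not> E z w"
  shows "card (N w \<inter> N z) \<le> card (cls z ` N z) * card (cls w ` N w)"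
proof -
  define T where "T = N w \<inter> N z"
  define h where "h t = (cls z t, cls w t)" for t
  have inj: "inj_on h T"
  proof (rule inj_onI)
    fix t t' assume tT: "t \<in> T" and t'T: "t' \<in> T" and eq: "h t = h t'"
    have et: "E z t" "E w t" "E z t'" "E w t'" using tT t'T unfolding T_def by auto
    have "t' \<in> cls z t'" "t' \<in> cls w t'" unfolding cls_def rel_def by auto
    hence r: "rel z t t'" "rel w t t'" using eq unfolding h_def cls_def by auto
    show "t = t'"
    proof (rule ccontr)
      assume ne: "t \<noteq> t'"
      hence s: "E t t'" "strong z t t'" "strong w t t'" using r ne unfolding rel_def by auto
      have r1: "rel t z t'" unfolding rel_def strong_def
        using s et ft_perm(1)[of t z t'] unfolding strong_def by (auto intro: sym)
      have r2: "rel t t' w" unfolding rel_def strong_def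
        using s et ft_perm(5)[of t t' w] unfolding strong_def by (auto intro: sym)
      have "rel t z w" by (rule rel_trans[OF _ r1 r2]) (use et in \<open>auto intro: sym\<close>)
      thus False using zw unfolding rel_def by auto
    qed
  qed
  have "h ` T \<subseteq> (cls z ` N z) \<times> (cls w ` N w)" unfolding h_def T_def by auto
  hence "card (h ` T) \<le> card ((cls z ` N z) \<times> (cls w ` N w))"
    by (rule card_mono[rotated]) simp
  thus ?thesis using card_image[OF inj] unfolding T_def by (simp add: card_cartesian_product)
qed

lemma main_count:
  assumes zV: "z \<in> V" and S0: "S > 0"
  shows "real k * (real k - l) * S^2 \<le> real (card (V - N z - {z})) * (real k)^2"
proof -
  define D where "D = V - N z - {z}"
  have fD: "finite D" unfolding D_def using fin by simp
  have cN: "real (card {w\<in>D. E t w}) = real k - l" if tz: "t \<in> N z" for t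
  proof -
    have zt: "E z t" "E t z" using tz by (auto intro: sym)
    have "N t = {z} \<union> (N t \<inter> N z) \<union> {w\<in>D. E t w}"
      unfolding D_def using NV zt by auto
    moreover have "card ({z} \<union> (N t \<inter> N z) \<union> {w\<in>D. E t w}) = card {z} + card (N t \<inter> N z) + card {w\<in>D. E t w}"
      by (rule card_Un3) (auto simp: D_def fin)
    moreover have "card (N t) = k" using kE zt by blast
    moreover have "card (N t \<inter> N z) = lam" using lamc zt by blast
    ultimately have "k = 1 + lam + card {w\<in>D. E t w}" by simp
    thus ?thesis unfolding l_def by simp
  qed
  have wb: "real (card {t\<in>N z. E t w}) * S^2 \<le> (real k)^2" if wD: "w \<in> D" for w
  proof -
    have wV: "w \<in> V" "w \<noteq> z" "\<not> E z w" using wD unfolding D_def by auto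
    have eqs: "{t\<in>N z. E t w} = N w \<inter> N z" using sym by auto
    have p: "card (N w \<inter> N z) \<le> card (cls z ` N z) * card (cls w ` N w)"
      by (rule pbound[OF zV wV(1)]) (use wV in auto)
    have f1: "real (card (cls z ` N z)) * S \<le> real k" by (rule fam_bound[OF zV])
    have f2: "real (card (cls w ` N w)) * S \<le> real k" by (rule fam_bound[OF wV(1)])
    have "real (card (N w \<inter> N z)) * S^2 \<le> real (card (cls z ` N z) * card (cls w ` N w)) * S^2"
      by (rule mult_right_mono) (use p in \<open>simp only: of_nat_le_iff\<close>, simp)
    also have "\<dots> = (real (card (cls z ` N z)) * S) * (real (card (cls w ` N w)) * S)"
      by (simp add: power2_eq_square algebra_simps)
    also have "\<dots> \<le> real k * real k"
      by (rule mult_mono[OF f1 f2]) (use S0 in auto)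
    finally show ?thesis unfolding eqs by (simp add: power2_eq_square)
  qed
  have "real k * (real k - l) * S^2 = (\<Sum>t\<in>N z. real (card {w\<in>D. E t w})) * S^2"
    using cN reg[OF zV] by simp
  also have "(\<Sum>t\<in>N z. real (card {w\<in>D. E t w})) = real (\<Sum>t\<in>N z. card {w\<in>D. E t w})" by simp
  also have "(\<Sum>t\<in>N z. card {w\<in>D. E t w}) = (\<Sum>w\<in>D. card {t\<in>N z. E t w})"
    by (rule double_count[OF _ fD]) simp
  also have "real (\<Sum>w\<in>D. card {t\<in>N z. E t w}) * S^2 = (\<Sum>w\<in>D. real (card {t\<in>N z. E t w}) * S^2)"
    by (simp add: sum_distrib_right)
  also have "\<dots> \<le> (\<Sum>w\<in>D. (real k)^2)" by (rule sum_mono) (rule wb)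
  also have "\<dots> = real (card D) * (real k)^2" by simp
  finally show ?thesis unfolding D_def .
qed

end


theorem theorem1:
  fixes V :: "'a set" and E :: "'a \<Rightarrow> 'a \<Rightarrow> bool" and n k lam mu :: nat
  assumes "sub_amply_regular V E n k lam mu"
    and "\<not> disjoint_union_of_cliques V E"
  shows "real lam + 1 < max (4 * sqrt (2 * real n))
            (6 / (sqrt 13 - 1) * sqrt (real k * (real mu - 1)))"
proof (rule ccontr)
  assume neg: "\<not> ?thesis"
  hence h1: "4 * sqrt (2 * real n) \<le> real lam + 1"
    and h2: "6 / (sqrt 13 - 1) * sqrt (real k * (real mu - 1)) \<le> real lam + 1"
    by (simp_all add: not_less)
  have A: "simple_graph V E" "card V = n" "\<forall>x \<in> V. card (neighbors V E x) = k"
     "\<forall>x y. E x y \<longrightarrow> common_neighbors V E x y = lam"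
     "\<forall>x y. dist_two V E x y \<longrightarrow> common_neighbors V E x y \<le> mu"
    using assms(1) unfolding sub_amply_regular_def by auto
  interpret sar V E k lam mu
    apply unfold_locales
    using A unfolding simple_graph_def common_neighbors_def by auto
  obtain z x y where zxy: "E z x" "E z y" "x \<noteq> y" "\<not> E x y" using cherry[OF assms(2)] by blast
  have zV: "z \<in> V" using zxy inV by blast
  note cf = cherry_facts[OF zxy]
  have m0: "m \<ge> 0" using cf(2) unfolding m_def by simp
  have l1: "l \<ge> 1" unfolding l_def by simp
  have kl: "real k \<ge> l" by (rule cf(3))
  have k2: "real k \<ge> 2 * l - m" by (rule cf(1))
  have L1: "32 * real n \<le> l^2"
  proof -
    have "(4 * sqrt (2 * real n))^2 \<le> l^2"
      by (rule power_mono) (use h1 in \<open>simp_all add: l_def\<close>)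
    thus ?thesis by (simp add: power_mult_distrib)
  qed
  have L2: "5 * (real k * m) \<le> l^2"
  proof -
    define q where "q = sqrt (real k * m)"
    define r where "r = sqrt 13 - 1"
    have km0: "0 \<le> real k * m" using m0 by simp
    have s13: "3.4 < sqrt 13" by (rule real_less_rsqrt) (simp add: power2_eq_square)
    have r0: "r > 2.4" unfolding r_def using s13 by simp
    have q0: "q \<ge> 0" unfolding q_def using km0 by simp
    have "6 / r * q \<le> l" using h2 unfolding q_def r_def m_def l_def by simp
    hence "6 * q \<le> l * r" using r0 by (simp add: field_simps)
    hence "(6 * q)^2 \<le> (l * r)^2" by (rule power_mono) (use q0 in simp)
    hence e: "36 * (real k * m) \<le> l^2 * r^2" using km0 unfolding q_def by (simp add: power_mult_distrib)
    have "r^2 = 14 - 2 * sqrt 13" unfolding r_def by (simp add: power2_eq_square algebra_simps)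
    hence "r^2 \<le> 7.2" using s13 by simp
    hence "l^2 * r^2 \<le> l^2 * 7.2" by (intro mult_left_mono) simp_all
    with e show ?thesis by simp
  qed
  have lm: "l * m \<le> real k * m" using kl m0 by (simp add: mult_right_mono)
  have m5: "5 * m \<le> l"
  proof -
    have "5 * m * l \<le> l * l" using L2 lm by (simp add: power2_eq_square algebra_simps)
    thus ?thesis using l1 by simp
  qed
  have ml: "m < l" using m5 m0 l1 by linarith
  have K2e: "K2 = real k * m - l * m" unfolding K2_def by (simp add: algebra_simps)
  have lm0: "0 \<le> l * m" using l1 m0 by simp
  have gap: "9 * K2 < 2 * (l - m)^2"
  proof -
    have "(l - m)^2 = l^2 - 2 * (l * m) + m^2" by (simp add: power2_eq_square algebra_simps)
    moreover have "0 < l^2" using l1 by simp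
    moreover have "0 \<le> m^2" by simp
    ultimately show ?thesis using K2e L2 lm0 by linarith
  qed
  interpret sar2 V E k lam mu by unfold_locales (use ml gap in auto)
  have S7: "S \<ge> 7/10 * l"
  proof -
    have "3 * K2 \<le> 6/10 * (l * (l - m))" using K2e L2 lm0 by (simp add: power2_eq_square algebra_simps)
    hence "3 * K2 / (2 * (l - m)) \<le> 3/10 * l" using ml by (simp add: divide_le_eq algebra_simps)
    thus ?thesis unfolding S_def by simp
  qed
  have S0: "S > 0" using S7 l1 by linarith
  define D where "D = V - N z - {z}"
  have mc: "real k * (real k - l) * S^2 \<le> real (card D) * (real k)^2"
    unfolding D_def by (rule main_count[OF zV S0])
  have cV: "card V = 1 + k + card D"
  proof -
    have "V = {z} \<union> N z \<union> D" unfolding D_def using zV NV by auto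
    moreover have "card ({z} \<union> N z \<union> D) = card {z} + card (N z) + card D"
      by (rule card_Un3) (auto simp: D_def fin)
    ultimately show ?thesis using reg[OF zV] by simp
  qed
  have cD: "real (card D) < real n" using cV A(2) by simp
  have k0: "real k > 0" using kl l1 by linarith
  have eq1: "real k * (real k - l) * S^2 = real k * ((real k - l) * S^2)" by (simp add: mult.assoc)
  have eq2: "real (card D) * (real k)^2 = real k * (real (card D) * real k)"
    by (simp add: power2_eq_square algebra_simps)
  have a1: "(real k - l) * S^2 \<le> real (card D) * real k"
    using mc k0 unfolding eq1 eq2 by (simp add: mult_le_cancel_left_pos)
  have a2: "(real k - l) * (49/100 * l^2) \<le> (real k - l) * S^2"
  proof (rule mult_left_mono)
    have "(7/10 * l)^2 \<le> S^2" by (rule power_mono[OF S7]) (use l1 in simp)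
    thus "49/100 * l^2 \<le> S^2" by (simp add: power2_eq_square)
  qed (use kl in simp)
  have a3: "real (card D) * real k \<le> real n * real k"
    using cD k0 by (intro mult_right_mono) simp_all
  have a4: "real n * real k \<le> l^2 / 32 * real k" using L1 k0 by (intro mult_right_mono) simp_all
  have "(real k - l) * (49/100 * l^2) \<le> l^2 / 32 * real k"
    using a2 a1 a3 a4 by linarith
  hence "((real k - l) * (49/100)) * l^2 \<le> (real k / 32) * l^2" by (simp add: algebra_simps)
  hence "(real k - l) * (49/100) \<le> real k / 32" using l1 by simp
  thus False using k2 m5 k0 by (simp add: field_simps)
qed

end
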